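(* Let $\mathcal{C}$ be a reversible chemical reaction network with species concentrations $x_1,\dots,x_n$, and let $G$ be its modified species--reaction graph (defined in the context). Run the edge-modification procedure described in the context on $G$, with an arbitrary fixed order on the reaction vertices and an arbitrary choice of the unmarked species vertex at each step. Then the procedure terminates, and it returns "UnconditionallyBinomial" if and only if $\mathcal{C}$ is unconditionally binomial, i.e. if and only if the steady state ideal $\langle p_1,\dots,p_n\rangle\subseteq\mathbb{Q}[k_{ij},x_1,\dots,x_n]$ (rate constants treated as indeterminates) is generated by binomials.
   Context: A reversible chemical reaction network (RCRN) consists of species $X_1,\dots,X_n$, complexes $C_1,\dots,C_s$ (each complex $C_i$ is a formal nonnegative integer combination $\sum_k y_{ik}X_k$, with monomial $m_i=\prod_k x_k^{y_{ik}}$), and a set of reversible reactions $C_i\rightleftharpoons C_j$ with $C_i\neq C_j$, each having forward rate constant $k_{ij}$ and reverse rate constant $k_{ji}$. Under mass-action kinetics, the binomial associated to the reaction $C_i\rightleftharpoons C_j$ is $b_{ij}=-k_{ij}m_i+k_{ji}m_j$, and the ODEs are $\dot x_k=p_k=\sum_{\text{reactions } C_i\rightleftharpoons C_j} c^{(k)}_{ij}b_{ij}$, where $c^{(k)}_{ij}=y_{ik}-y_{jk}$ is the difference between the stoichiometric coefficients of $X_k$ in the reactant and product complexes. The steady state ideal is $\langle p_1,\dots,p_n\rangle$; the rate constants $k_{ij}$ are treated as independent indeterminates, and the network is called unconditionally binomial if this ideal in $\mathbb{Q}[k_{ij},x_1,\dots,x_n]$ can be generated by binomials (polynomials with at most two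 terms). Modified species--reaction graph $G$: a bipartite graph with one species vertex for each species $X_k$ and one reaction vertex for each reversible reaction $C_i\rightleftharpoons C_j$ (each reversible pair counted once); there is an undirected edge between species vertex $X_k$ and reaction vertex $C_i\rightleftharpoons C_j$ exactly when $c^{(k)}_{ij}\neq 0$, and that edge carries the label $c^{(k)}_{ij}$. (Equivalently, $G$ encodes the binomial coefficient matrix, whose rows are indexed by species, columns by reactions, and entries are $c^{(k)}_{ij}$; edges correspond to nonzero entries.) For an edge $s$–$r$ write $c(s,r)$ for its current label. Procedure (Algorithm 1): Initially all species vertices are unmarked. Process the reaction vertices $r$ one at a time in a fixed order. For the current $r$, let $N(r)$ be the set of species vertices currently adjacent to $r$. If no vertex of $N(r)$ is unmarked, skip $r$. Otherwise choose an unmarked $cs\in N(r)$ and mark it; then for each $s'\in N(r)$ with $s'\neq cs$: set $\mu=-c(s',r)/c(cs,r)$; delete the edge $s'$–$r$; and for every reaction vertex $r'\neq r$ currently adjacent to $cs$: if $s'$ is adjacent to $r'$, replace its label by $c(cs,r')\mu+c(s',r')$ if this number is nonzero and delete the edge $s'$–$r'$ if it is zero; if $s'$ is not adjacent to $r'$, add the edge $s'$–$r'$ with label $c(cs,r')\mu$. After all reaction vertices have been processed, return "UnconditionallyBinomial" if every connected component of the final graph consists either of a single species vertex alone, or of exactly one species vertex and one reaction vertex joined by an edge; otherwise return "NotUnconditionallyBinomial". *)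

theory Defs
  imports Complex_Main "HOL-Library.Poly_Mapping"
begin

datatype var = X nat | K nat nat   (* X k = species concentration x_k; K i j = rate constant k_ij *)

type_synonym mpoly = "(var \<Rightarrow>\<^sub>0 nat) \<Rightarrow>\<^sub>0 rat"

definition Var :: "var \<Rightarrow> mpoly" where
  "Var v = Poly_Mapping.single (Poly_Mapping.single v 1) 1"

definition Const :: "rat \<Rightarrow> mpoly" where
  "Const c = Poly_Mapping.single 0 c"

definition is_binomial :: "mpoly \<Rightarrow> bool" where
  "is_binomial p \<longleftrightarrow> card (Poly_Mapping.keys p) \<le> 2"

definition ideal_gen :: "mpoly set \<Rightarrow> mpoly set" where
  "ideal_gen S = {p. \<exists>F c. finite F \<and> F \<subseteq> S \<and> p = (\<Sum>f\<in>F. c f * f)}"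

text \<open>n species X_0..X_(n-1); complex i has stoichiometric coefficients y i k;
  reactions are given by a list rxns of pairs (i,j) standing for C_i <=> C_j
  (each reversible pair listed once); reaction vertex r is rxns ! r.\<close>

definition monom :: "nat \<Rightarrow> (nat \<Rightarrow> nat \<Rightarrow> nat) \<Rightarrow> nat \<Rightarrow> mpoly" where
  "monom n y i = (\<Prod>k<n. Var (X k) ^ y i k)"

definition binom :: "nat \<Rightarrow> (nat \<Rightarrow> nat \<Rightarrow> nat) \<Rightarrow> nat \<Rightarrow> nat \<Rightarrow> mpoly" where
  "binom n y i j = - (Var (K i j) * monom n y i) + Var (K j i) * monom n y j"

definition coef :: "(nat \<Rightarrow> nat \<Rightarrow> nat) \<Rightarrow> nat \<Rightarrow> nat \<Rightarrow> nat \<Rightarrow> rat" where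
  "coef y k i j = of_nat (y i k) - of_nat (y j k)"

definition ss_poly :: "nat \<Rightarrow> (nat \<Rightarrow> nat \<Rightarrow> nat) \<Rightarrow> (nat \<times> nat) list \<Rightarrow> nat \<Rightarrow> mpoly" where
  "ss_poly n y rxns k = (\<Sum>r<length rxns. case rxns ! r of (i, j) \<Rightarrow> Const (coef y k i j) * binom n y i j)"

definition steady_state_ideal :: "nat \<Rightarrow> (nat \<Rightarrow> nat \<Rightarrow> nat) \<Rightarrow> (nat \<times> nat) list \<Rightarrow> mpoly set" where
  "steady_state_ideal n y rxns = ideal_gen (ss_poly n y rxns ` {..<n})"

definition unconditionally_binomial :: "nat \<Rightarrow> (nat \<Rightarrow> nat \<Rightarrow> nat) \<Rightarrow> (nat \<times> nat) list \<Rightarrow> bool" where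
  "unconditionally_binomial n y rxns \<longleftrightarrow>
     (\<exists>B. (\<forall>b\<in>B. is_binomial b) \<and> ideal_gen B = steady_state_ideal n y rxns)"

text \<open>A labelled bipartite graph is encoded by L s r (species s < n, reaction r < m);
  there is an edge s--r iff L s r \<noteq> 0, and then L s r is its label.\<close>

definition init_graph :: "(nat \<Rightarrow> nat \<Rightarrow> nat) \<Rightarrow> (nat \<times> nat) list \<Rightarrow> nat \<Rightarrow> nat \<Rightarrow> rat" where
  "init_graph y rxns s r = (case rxns ! r of (i, j) \<Rightarrow> coef y s i j)"

definition nbrs :: "nat \<Rightarrow> (nat \<Rightarrow> nat \<Rightarrow> rat) \<Rightarrow> nat \<Rightarrow> nat set" where
  "nbrs n L r = {s. s < n \<and> L s r \<noteq> 0}"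

text \<open>Processing reaction vertex r with chosen (unmarked) species cs.  The updates for
  the different s' are independent of each other, so they are performed simultaneously.\<close>
definition pivot :: "nat \<Rightarrow> nat \<Rightarrow> (nat \<Rightarrow> nat \<Rightarrow> rat) \<Rightarrow> nat \<Rightarrow> nat \<Rightarrow> nat \<Rightarrow> nat \<Rightarrow> rat" where
  "pivot n m L r cs = (\<lambda>s r'.
     if s \<in> nbrs n L r \<and> s \<noteq> cs then
       (if r' = r then 0
        else if r' < m \<and> L cs r' \<noteq> 0 then L cs r' * (- L s r / L cs r) + L s r'
        else L s r')
     else L s r')"

text \<open>run n m order (L, M) (L', M'): processing the reaction vertices in the list
  order, starting from graph L with marked set M, can end in (L', M'), for some
  choice of unmarked species vertices.\<close>
inductive run :: "nat \<Rightarrow> nat \<Rightarrow> nat list \<Rightarrow> (nat \<Rightarrow> nat \<Rightarrow> rat) \<times> nat set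
                    \<Rightarrow> (nat \<Rightarrow> nat \<Rightarrow> rat) \<times> nat set \<Rightarrow> bool" for n m where
  run_Nil: "run n m [] S S"
| run_skip: "nbrs n L r \<subseteq> M \<Longrightarrow> run n m rs (L, M) S' \<Longrightarrow> run n m (r # rs) (L, M) S'"
| run_pivot: "cs \<in> nbrs n L r \<Longrightarrow> cs \<notin> M \<Longrightarrow>
     run n m rs (pivot n m L r cs, insert cs M) S' \<Longrightarrow> run n m (r # rs) (L, M) S'"

definition vertices :: "nat \<Rightarrow> nat \<Rightarrow> (nat + nat) set" where
  "vertices n m = Inl ` {..<n} \<union> Inr ` {..<m}"

definition edges :: "nat \<Rightarrow> nat \<Rightarrow> (nat \<Rightarrow> nat \<Rightarrow> rat) \<Rightarrow> ((nat + nat) \<times> (nat + nat)) set" where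
  "edges n m L = {(Inl s, Inr r) | s r. s < n \<and> r < m \<and> L s r \<noteq> 0}
              \<union> {(Inr r, Inl s) | s r. s < n \<and> r < m \<and> L s r \<noteq> 0}"

definition component :: "nat \<Rightarrow> nat \<Rightarrow> (nat \<Rightarrow> nat \<Rightarrow> rat) \<Rightarrow> nat + nat \<Rightarrow> (nat + nat) set" where
  "component n m L v = {w. (v, w) \<in> (edges n m L)\<^sup>*}"

definition returns_UB :: "nat \<Rightarrow> nat \<Rightarrow> (nat \<Rightarrow> nat \<Rightarrow> rat) \<Rightarrow> bool" where
  "returns_UB n m L \<longleftrightarrow> (\<forall>v\<in>vertices n m.
      (\<exists>s<n. component n m L v = {Inl s}) \<or>
      (\<exists>s<n. \<exists>r<m. L s r \<noteq> 0 \<and> component n m L v = {Inl s, Inr r}))"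

end

theory Submission
  imports Defs
begin

section \<open>Ideals\<close>

lemma ideal_gen_min:
  assumes "0 \<in> J" "\<And>a b. a \<in> J \<Longrightarrow> b \<in> J \<Longrightarrow> a + b \<in> J"
    "\<And>q a. a \<in> J \<Longrightarrow> q * a \<in> J" "S \<subseteq> J"
  shows "ideal_gen S \<subseteq> J"
proof
  fix p assume "p \<in> ideal_gen S"
  then obtain F c where F: "finite F" "F \<subseteq> S" "p = (\<Sum>f\<in>F. c f * f)"
    unfolding ideal_gen_def by blast
  have "(\<Sum>f\<in>F. c f * f) \<in> J" using F(1,2)
  proof (induction F rule: finite_induct)
    case empty then show ?case using assms by simp
  next
    case (insert x F)
    then have "x \<in> J" using assms(4) by blast
    then have "c x * x \<in> J" using assms(3) by blast
    then show ?case using insert assms(2) by (simp add: sum.insert)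
  qed
  then show "p \<in> J" using F by simp
qed

lemma ideal_gen_zero: "0 \<in> ideal_gen S"
  unfolding ideal_gen_def by (rule CollectI, rule exI[of _ "{}"]) simp

lemma ideal_gen_gen: "f \<in> S \<Longrightarrow> f \<in> ideal_gen S"
  unfolding ideal_gen_def
  by (rule CollectI, rule exI[of _ "{f}"], rule exI[of _ "\<lambda>_. 1"]) simp

lemma ideal_gen_mult: "a \<in> ideal_gen S \<Longrightarrow> q * a \<in> ideal_gen S"
proof -
  assume "a \<in> ideal_gen S"
  then obtain F c where F: "finite F" "F \<subseteq> S" "a = (\<Sum>f\<in>F. c f * f)"
    unfolding ideal_gen_def by blast
  have "q * a = (\<Sum>f\<in>F. (q * c f) * f)" using F(3)
    by (simp add: sum_distrib_left mult.assoc)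
  then show ?thesis using F unfolding ideal_gen_def
    by (intro CollectI exI[of _ F] exI[of _ "\<lambda>f. q * c f"]) simp
qed

lemma sum_if_restrict:
  fixes g :: "mpoly \<Rightarrow> mpoly"
  assumes "finite F" "F1 \<subseteq> F"
  shows "(\<Sum>f\<in>F. (if f \<in> F1 then c f else 0) * g f) = (\<Sum>f\<in>F1. c f * g f)"
proof -
  have "(\<Sum>f\<in>F. (if f \<in> F1 then c f else 0) * g f) = (\<Sum>f\<in>F. (if f \<in> F1 then c f * g f else 0))"
    by (rule sum.cong) auto
  also have "\<dots> = (\<Sum>f\<in>F \<inter> F1. c f * g f)"
    using assms(1) by (simp add: sum.inter_restrict)
  also have "F \<inter> F1 = F1" using assms(2) by blast
  finally show ?thesis .
qed

lemma ideal_gen_add: "a \<in> ideal_gen S \<Longrightarrow> b \<in> ideal_gen S \<Longrightarrow> a + b \<in> ideal_gen S"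
proof -
  assume "a \<in> ideal_gen S" "b \<in> ideal_gen S"
  then obtain F1 c1 F2 c2 where F: "finite F1" "F1 \<subseteq> S" "a = (\<Sum>f\<in>F1. c1 f * f)"
     "finite F2" "F2 \<subseteq> S" "b = (\<Sum>f\<in>F2. c2 f * f)"
    unfolding ideal_gen_def by blast
  define c where "c f = (if f \<in> F1 then c1 f else 0) + (if f \<in> F2 then c2 f else 0)" for f
  have "(\<Sum>f\<in>F1 \<union> F2. c f * f) = (\<Sum>f\<in>F1 \<union> F2. (if f \<in> F1 then c1 f else 0) * f)
      + (\<Sum>f\<in>F1 \<union> F2. (if f \<in> F2 then c2 f else 0) * f)"
    unfolding c_def by (simp add: distrib_right sum.distrib)
  also have "\<dots> = a + b" using F
    by (simp add: sum_if_restrict[where g = "\<lambda>f. f"])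
  finally have "a + b = (\<Sum>f\<in>F1 \<union> F2. c f * f)" by simp
  then show ?thesis using F unfolding ideal_gen_def
    by (intro CollectI exI[of _ "F1 \<union> F2"] exI[of _ c]) auto
qed

lemma ideal_gen_sum: "finite A \<Longrightarrow> (\<And>x. x \<in> A \<Longrightarrow> g x \<in> ideal_gen S) \<Longrightarrow> (\<Sum>x\<in>A. g x) \<in> ideal_gen S"
  by (induction A rule: finite_induct) (auto intro: ideal_gen_zero ideal_gen_add)

section \<open>Linear functionals\<close>

definition FF :: "((var \<Rightarrow>\<^sub>0 nat) \<Rightarrow> rat) \<Rightarrow> mpoly \<Rightarrow> rat" where
  "FF w g = (\<Sum>\<alpha>\<in>Poly_Mapping.keys g. Poly_Mapping.lookup g \<alpha> * w \<alpha>)"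

lemma FF_superset: "finite S \<Longrightarrow> Poly_Mapping.keys g \<subseteq> S \<Longrightarrow>
  FF w g = (\<Sum>\<alpha>\<in>S. Poly_Mapping.lookup g \<alpha> * w \<alpha>)"
  unfolding FF_def
  by (rule sum.mono_neutral_left) (auto simp: in_keys_iff)

lemma FF_add: "FF w (p + q) = FF w p + FF w q"
proof -
  let ?S = "Poly_Mapping.keys p \<union> Poly_Mapping.keys q"
  have "FF w (p + q) = (\<Sum>\<alpha>\<in>?S. Poly_Mapping.lookup (p+q) \<alpha> * w \<alpha>)"
    by (rule FF_superset) (auto simp: keys_add)
  also have "\<dots> = (\<Sum>\<alpha>\<in>?S. Poly_Mapping.lookup p \<alpha> * w \<alpha>) + (\<Sum>\<alpha>\<in>?S. Poly_Mapping.lookup q \<alpha> * w \<alpha>)"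
    by (simp add: lookup_add distrib_right sum.distrib)
  also have "\<dots> = FF w p + FF w q"
    by (simp add: FF_superset[of ?S])
  finally show ?thesis .
qed

lemma FF_uminus: "FF w (- p) = - FF w p"
  unfolding FF_def by (simp add: sum_negf)

lemma FF_zero: "FF w 0 = 0"
  unfolding FF_def by simp

lemma FF_sum: "finite A \<Longrightarrow> FF w (\<Sum>x\<in>A. g x) = (\<Sum>x\<in>A. FF w (g x))"
  by (induction A rule: finite_induct) (auto simp: FF_zero FF_add)

lemma FF_single: "FF w (Poly_Mapping.single \<alpha> c) = c * w \<alpha>"
  unfolding FF_def by simp

lemma poly_expand: "p = (\<Sum>\<alpha>\<in>Poly_Mapping.keys p. Poly_Mapping.single \<alpha> (Poly_Mapping.lookup p \<alpha>))"
  (is "_ = ?r")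
proof (rule poly_mapping_eqI)
  fix k
  have "Poly_Mapping.lookup ?r k = (\<Sum>\<alpha>\<in>Poly_Mapping.keys p. (Poly_Mapping.lookup p \<alpha> when \<alpha> = k))"
    by (simp add: lookup_sum lookup_single)
  also have "\<dots> = Poly_Mapping.lookup p k"
    by (cases "k \<in> Poly_Mapping.keys p") (auto simp: when_def in_keys_iff)
  finally show "Poly_Mapping.lookup p k = Poly_Mapping.lookup ?r k" by simp
qed

lemma FF_mult: "FF w (p * q) = (\<Sum>\<alpha>\<in>Poly_Mapping.keys p. \<Sum>\<beta>\<in>Poly_Mapping.keys q.
    Poly_Mapping.lookup p \<alpha> * Poly_Mapping.lookup q \<beta> * w (\<alpha> + \<beta>))"
proof -
  have "p * q = (\<Sum>\<alpha>\<in>Poly_Mapping.keys p. Poly_Mapping.single \<alpha> (Poly_Mapping.lookup p \<alpha>)) *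
     (\<Sum>\<beta>\<in>Poly_Mapping.keys q. Poly_Mapping.single \<beta> (Poly_Mapping.lookup q \<beta>))"
    using poly_expand[of p] poly_expand[of q] by simp
  also have "\<dots> = (\<Sum>\<alpha>\<in>Poly_Mapping.keys p. \<Sum>\<beta>\<in>Poly_Mapping.keys q.
      Poly_Mapping.single (\<alpha> + \<beta>) (Poly_Mapping.lookup p \<alpha> * Poly_Mapping.lookup q \<beta>))"
    by (simp only: sum_distrib_right) (simp only: sum_distrib_left mult_single)
  finally show ?thesis by (simp add: FF_sum FF_single)
qed

definition zf :: "(var \<Rightarrow>\<^sub>0 nat) \<Rightarrow> rat" where
  "zf \<alpha> = (if \<forall>i j. Poly_Mapping.lookup \<alpha> (K i j) = 0 then 1 else 0)"

definition phif :: "var \<Rightarrow> (var \<Rightarrow>\<^sub>0 nat) \<Rightarrow> rat" where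
  "phif v \<alpha> = (if Poly_Mapping.lookup \<alpha> v = 1 \<and> (\<forall>i j. K i j \<noteq> v \<longrightarrow> Poly_Mapping.lookup \<alpha> (K i j) = 0) then 1 else 0)"

lemma zf_add: "zf (\<alpha> + \<beta>) = zf \<alpha> * zf \<beta>"
  unfolding zf_def by (auto simp: lookup_add)

lemma aux01: "(if a+b=(1::nat) \<and> A \<and> B then 1 else 0) = (if A \<and> a=0 then 1 else 0) * (if b=1 \<and> B then 1 else 0) + (if a=1 \<and> A then 1 else 0) * (if B \<and> b=0 then (1::'a::semiring_1) else 0)"
  by (cases A; cases B) (auto simp: add_is_1)

lemma phif_add:
  assumes "v = K a b"
  shows "phif v (\<alpha> + \<beta>) = zf \<alpha> * phif v \<beta> + phif v \<alpha> * zf \<beta>"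
proof -
  have e: "Poly_Mapping.lookup (\<alpha> + \<beta>) w = Poly_Mapping.lookup \<alpha> w + Poly_Mapping.lookup \<beta> w" for w
    by (simp add: lookup_add)
  define A where "A = (\<forall>i j. Poly_Mapping.lookup \<alpha> (K i j) = 0)"
  define B where "B = (\<forall>i j. Poly_Mapping.lookup \<beta> (K i j) = 0)"
  define A' where "A' = (\<forall>i j. K i j \<noteq> v \<longrightarrow> Poly_Mapping.lookup \<alpha> (K i j) = 0)"
  define B' where "B' = (\<forall>i j. K i j \<noteq> v \<longrightarrow> Poly_Mapping.lookup \<beta> (K i j) = 0)"
  have AB: "(\<forall>i j. K i j \<noteq> v \<longrightarrow> Poly_Mapping.lookup (\<alpha>+\<beta>) (K i j) = 0) = (A' \<and> B')"
    unfolding A'_def B'_def e by auto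
  have gen: "(\<forall>i j. f (K i j) = (0::nat)) = ((\<forall>i j. K i j \<noteq> v \<longrightarrow> f (K i j) = 0) \<and> f v = 0)" for f
  proof
    assume "\<forall>i j. f (K i j) = 0" then show "(\<forall>i j. K i j \<noteq> v \<longrightarrow> f (K i j) = 0) \<and> f v = 0"
      using assms by simp
  next
    assume h: "(\<forall>i j. K i j \<noteq> v \<longrightarrow> f (K i j) = 0) \<and> f v = 0"
    show "\<forall>i j. f (K i j) = 0"
    proof (intro allI)
      fix i j show "f (K i j) = 0" using h by (cases "K i j = v") auto
    qed
  qed
  have A: "A = (A' \<and> Poly_Mapping.lookup \<alpha> v = 0)" unfolding A_def A'_def by (rule gen)
  have B: "B = (B' \<and> Poly_Mapping.lookup \<beta> v = 0)" unfolding B_def B'_def by (rule gen)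
  have P1: "phif v (\<alpha>+\<beta>) = (if Poly_Mapping.lookup \<alpha> v + Poly_Mapping.lookup \<beta> v = 1 \<and> A' \<and> B' then 1 else 0)"
    unfolding phif_def AB by (simp add: e)
  have P2: "phif v \<alpha> = (if Poly_Mapping.lookup \<alpha> v = 1 \<and> A' then 1 else 0)"
    unfolding phif_def A'_def by simp
  have P3: "phif v \<beta> = (if Poly_Mapping.lookup \<beta> v = 1 \<and> B' then 1 else 0)"
    unfolding phif_def B'_def by simp
  have Z1: "zf \<alpha> = (if A' \<and> Poly_Mapping.lookup \<alpha> v = 0 then 1 else 0)"
    unfolding zf_def A_def[symmetric] A by simp
  have Z2: "zf \<beta> = (if B' \<and> Poly_Mapping.lookup \<beta> v = 0 then 1 else 0)"
    unfolding zf_def B_def[symmetric] B by simp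
  show ?thesis unfolding P1 P2 P3 Z1 Z2 by (rule aux01)
qed

abbreviation ZZ where "ZZ \<equiv> FF zf"
abbreviation PH where "PH v \<equiv> FF (phif v)"

lemma ZZ_mult: "ZZ (p * q) = ZZ p * ZZ q"
  unfolding FF_mult zf_add FF_def[of zf p] FF_def[of zf q] sum_product
  by (intro sum.cong refl) (simp add: algebra_simps)

lemma PH_mult: assumes "v = K a b" shows "PH v (p * q) = ZZ p * PH v q + PH v p * ZZ q"
proof -
  have "PH v (p * q) = (\<Sum>\<alpha>\<in>Poly_Mapping.keys p. \<Sum>\<beta>\<in>Poly_Mapping.keys q.
    Poly_Mapping.lookup p \<alpha> * Poly_Mapping.lookup q \<beta> * (zf \<alpha> * phif v \<beta> + phif v \<alpha> * zf \<beta>))"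
    unfolding FF_mult phif_add[OF assms] ..
  also have "\<dots> = (\<Sum>\<alpha>\<in>Poly_Mapping.keys p. \<Sum>\<beta>\<in>Poly_Mapping.keys q.
    (Poly_Mapping.lookup p \<alpha> * zf \<alpha>) * (Poly_Mapping.lookup q \<beta> * phif v \<beta>)) +
    (\<Sum>\<alpha>\<in>Poly_Mapping.keys p. \<Sum>\<beta>\<in>Poly_Mapping.keys q.
    (Poly_Mapping.lookup p \<alpha> * phif v \<alpha>) * (Poly_Mapping.lookup q \<beta> * zf \<beta>))"
    unfolding sum.distrib[symmetric] by (intro sum.cong refl) (simp add: algebra_simps)
  also have "\<dots> = ZZ p * PH v q + PH v p * ZZ q"
    unfolding FF_def sum_product ..
  finally show ?thesis .
qed

definition mexp :: "nat \<Rightarrow> (nat \<Rightarrow> nat \<Rightarrow> nat) \<Rightarrow> nat \<Rightarrow> (var \<Rightarrow>\<^sub>0 nat)" where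
  "mexp n y i = (\<Sum>k<n. Poly_Mapping.single (X k) (y i k))"

lemma Var_pow: "Var v ^ e = Poly_Mapping.single (Poly_Mapping.single v e) 1"
proof (induction e)
  case 0 then show ?case by simp
next
  case (Suc e)
  have "Var v ^ Suc e = Var v * Var v ^ e" by simp
  also have "\<dots> = Poly_Mapping.single (Poly_Mapping.single v 1 + Poly_Mapping.single v e) 1"
    using Suc by (simp add: Var_def mult_single del: One_nat_def)
  also have "Poly_Mapping.single v 1 + Poly_Mapping.single v e = Poly_Mapping.single v (Suc e)"
    by (simp add: single_add[symmetric])
  finally show ?case .
qed

lemma prod_single: "finite A \<Longrightarrow> (\<Prod>k\<in>A. Poly_Mapping.single (g k) (1::rat)) = Poly_Mapping.single (\<Sum>k\<in>A. g k) 1"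
  by (induction A rule: finite_induct) (auto simp: mult_single)

lemma monom_single: "monom n y i = Poly_Mapping.single (mexp n y i) 1"
  unfolding monom_def mexp_def Var_pow by (simp add: prod_single)

lemma mexp_K: "Poly_Mapping.lookup (mexp n y i) (K a b) = 0"
  unfolding mexp_def by (simp add: lookup_sum lookup_single)

lemma VarK_monom: "Var (K a b) * monom n y i = Poly_Mapping.single (Poly_Mapping.single (K a b) 1 + mexp n y i) 1"
  unfolding monom_single Var_def by (simp add: mult_single)

lemma lookup_term: "Poly_Mapping.lookup (Poly_Mapping.single (K a b) 1 + mexp n y i) (K c d) = (if K c d = K a b then 1 else 0)"
  by (simp add: lookup_add mexp_K lookup_single when_def)

lemma zf_term: "zf (Poly_Mapping.single (K a b) 1 + mexp n y i) = 0"
  unfolding zf_def lookup_term by auto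

lemma phif_term: "phif (K c d) (Poly_Mapping.single (K a b) 1 + mexp n y i) = (if K c d = K a b then 1 else 0)"
  unfolding phif_def lookup_term by auto

lemma binom_single: "binom n y i j = - Poly_Mapping.single (Poly_Mapping.single (K i j) 1 + mexp n y i) 1
   + Poly_Mapping.single (Poly_Mapping.single (K j i) 1 + mexp n y j) 1"
  unfolding binom_def VarK_monom ..

lemma ZZ_binom: "ZZ (binom n y i j) = 0"
  unfolding binom_single by (simp only: FF_add FF_uminus FF_single zf_term)

lemma PH_binom: "PH (K c d) (binom n y i j) = - (if K c d = K i j then 1 else 0) + (if K c d = K j i then 1 else 0)"
  unfolding binom_single by (simp only: FF_add FF_uminus FF_single phif_term)

lemma binom_binomial: "is_binomial (binom n y i j)"
proof -
  let ?a = "Poly_Mapping.single (K i j) 1 + mexp n y i"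
  let ?b = "Poly_Mapping.single (K j i) 1 + mexp n y j"
  have "Poly_Mapping.keys (binom n y i j) \<subseteq> {?a, ?b}"
    unfolding binom_single using keys_add[of "- Poly_Mapping.single ?a (1::rat)" "Poly_Mapping.single ?b 1"]
    by auto
  then have "card (Poly_Mapping.keys (binom n y i j)) \<le> card {?a, ?b}"
    by (rule card_mono[rotated]) simp
  also have "\<dots> \<le> 2" by (simp add: card_insert_if)
  finally show ?thesis unfolding is_binomial_def .
qed

lemma Const_mult: "Const a * Const b = Const (a * b)"
  unfolding Const_def by (simp add: mult_single)

lemma Const_add: "Const a + Const b = Const (a + b)"
  unfolding Const_def by (simp add: single_add)

lemma Const_0: "Const 0 = 0" unfolding Const_def by simp
lemma Const_1: "Const 1 = 1" unfolding Const_def by simp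

lemma Const_sum: "finite A \<Longrightarrow> (\<Sum>x\<in>A. Const (g x)) = Const (\<Sum>x\<in>A. g x)"
  by (induction A rule: finite_induct) (auto simp: Const_0 Const_add)

lemma ZZ_Const: "ZZ (Const a) = a"
  unfolding Const_def FF_single zf_def by simp

lemma PH_Const: "PH v (Const a) = 0"
  unfolding Const_def FF_single phif_def by simp

section \<open>Row space\<close>

definition ev :: "nat \<Rightarrow> nat \<Rightarrow> rat" where "ev r = (\<lambda>r'. if r' = r then 1 else 0)"

definition inrow :: "nat \<Rightarrow> nat \<Rightarrow> (nat \<Rightarrow> nat \<Rightarrow> rat) \<Rightarrow> (nat \<Rightarrow> rat) \<Rightarrow> bool" where
  "inrow n m L x \<longleftrightarrow> (\<exists>v. \<forall>r'<m. x r' = (\<Sum>s<n. v s * L s r'))"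

lemma inrow_scale: "inrow n m L x \<Longrightarrow> (\<And>r'. r' < m \<Longrightarrow> x' r' = c * x r') \<Longrightarrow> inrow n m L x'"
  unfolding inrow_def
proof -
  assume "\<exists>v. \<forall>r'<m. x r' = (\<Sum>s<n. v s * L s r')" and h: "\<And>r'. r' < m \<Longrightarrow> x' r' = c * x r'"
  then obtain v where v: "\<forall>r'<m. x r' = (\<Sum>s<n. v s * L s r')" by blast
  have "\<forall>r'<m. x' r' = (\<Sum>s<n. (c * v s) * L s r')"
    using v h by (simp add: sum_distrib_left mult.assoc)
  then show "\<exists>v. \<forall>r'<m. x' r' = (\<Sum>s<n. v s * L s r')" by (intro exI[of _ "\<lambda>s. c * v s"]) simp
qed

lemma inrow_add: "inrow n m L x \<Longrightarrow> inrow n m L x' \<Longrightarrow> inrow n m L (\<lambda>r. x r + x' r)"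
  unfolding inrow_def
proof -
  assume "\<exists>v. \<forall>r'<m. x r' = (\<Sum>s<n. v s * L s r')" "\<exists>v. \<forall>r'<m. x' r' = (\<Sum>s<n. v s * L s r')"
  then obtain v v' where v: "\<forall>r'<m. x r' = (\<Sum>s<n. v s * L s r')" "\<forall>r'<m. x' r' = (\<Sum>s<n. v' s * L s r')" by blast
  have "\<forall>r'<m. x r' + x' r' = (\<Sum>s<n. (v s + v' s) * L s r')"
    using v by (simp add: distrib_right sum.distrib)
  then show "\<exists>v. \<forall>r'<m. x r' + x' r' = (\<Sum>s<n. v s * L s r')" by (intro exI[of _ "\<lambda>s. v s + v' s"]) simp
qed

lemma inrow_zero: "inrow n m L (\<lambda>r. 0)"
  unfolding inrow_def by (rule exI[of _ "\<lambda>_. 0"]) simp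

lemma inrow_row: assumes "k < n" shows "inrow n m L (\<lambda>r. L k r)"
proof -
  have "(\<Sum>s<n. (if s = k then 1 else 0) * L s r') = L k r'" for r'
  proof -
    have "(\<Sum>s<n. (if s = k then 1 else 0) * L s r') = (\<Sum>s<n. if s = k then L s r' else 0)"
      by (rule sum.cong) auto
    then show ?thesis using assms by simp
  qed
  then show ?thesis unfolding inrow_def by (intro exI[of _ "\<lambda>s. if s = k then 1 else 0"]) simp
qed

definition fwd :: "(nat \<times> nat) list \<Rightarrow> nat \<Rightarrow> var" where
  "fwd rxns r = K (fst (rxns ! r)) (snd (rxns ! r))"
definition rv :: "(nat \<times> nat) list \<Rightarrow> nat \<Rightarrow> var" where
  "rv rxns r = K (snd (rxns ! r)) (fst (rxns ! r))"

lemma ss_poly_expand: "ss_poly n y rxns k =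
  (\<Sum>r<length rxns. Const (init_graph y rxns k r) * binom n y (fst (rxns!r)) (snd (rxns!r)))"
  unfolding ss_poly_def init_graph_def by (simp add: case_prod_beta)

lemma ZZ_ss: "ZZ (ss_poly n y rxns k) = 0"
  unfolding ss_poly_expand by (simp add: FF_sum ZZ_mult ZZ_binom)

lemma PH_ss: "PH (K a b) (ss_poly n y rxns k) = (\<Sum>r<length rxns. init_graph y rxns k r *
   (- (if K a b = fwd rxns r then 1 else 0) + (if K a b = rv rxns r then 1 else 0)))"
  unfolding ss_poly_expand fwd_def rv_def
  by (simp add: FF_sum PH_mult[of _ a b] PH_Const ZZ_Const ZZ_binom PH_binom del: var.inject)

lemma ideal_gen_sum_mult: "finite A \<Longrightarrow> (\<And>x. x \<in> A \<Longrightarrow> b x \<in> ideal_gen S) \<Longrightarrow> (\<Sum>x\<in>A. q x * b x) \<in> ideal_gen S"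
  by (rule ideal_gen_sum) (auto intro: ideal_gen_mult)

locale net =
  fixes n c :: nat and y :: "nat \<Rightarrow> nat \<Rightarrow> nat" and rxns :: "(nat \<times> nat) list"
  assumes rxns_wf: "\<forall>(i, j)\<in>set rxns. i < c \<and> j < c \<and> i \<noteq> j"
    and rxns_once: "distinct (map (\<lambda>(i, j). {i, j}) rxns)"
begin

abbreviation "m \<equiv> length rxns"
abbreviation "A \<equiv> init_graph y rxns"

lemma idx_eq:
  assumes "r < m" "r' < m" "{fst (rxns!r), snd (rxns!r)} = {fst (rxns!r'), snd (rxns!r')}"
  shows "r = r'"
proof -
  have "map (\<lambda>(i, j). {i, j}) rxns ! r = map (\<lambda>(i, j). {i, j}) rxns ! r'"
    using assms by (simp add: case_prod_beta)
  then show ?thesis using nth_eq_iff_index_eq[OF rxns_once] assms by simp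
qed

lemma nonloop: "r < m \<Longrightarrow> fst (rxns!r) \<noteq> snd (rxns!r)"
  using rxns_wf nth_mem[of r rxns] by (auto simp: case_prod_beta)

lemma in_range: "r < m \<Longrightarrow> fst (rxns!r) < c \<and> snd (rxns!r) < c"
  using rxns_wf nth_mem[of r rxns] by (auto simp: case_prod_beta)

lemma fwd_inj: "r < m \<Longrightarrow> r' < m \<Longrightarrow> fwd rxns r = fwd rxns r' \<longleftrightarrow> r = r'"
  unfolding fwd_def using idx_eq by auto

lemma rv_inj: "r < m \<Longrightarrow> r' < m \<Longrightarrow> rv rxns r = rv rxns r' \<longleftrightarrow> r = r'"
  unfolding rv_def using idx_eq by auto

lemma fwd_rv: assumes a: "r < m" "r' < m" shows "fwd rxns r \<noteq> rv rxns r'"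
proof
  assume a3: "fwd rxns r = rv rxns r'"
  then have e1: "fst (rxns!r) = snd (rxns!r')" "snd (rxns!r) = fst (rxns!r')"
    unfolding fwd_def rv_def by simp_all
  then have "{fst (rxns!r), snd (rxns!r)} = {fst (rxns!r'), snd (rxns!r')}"
    by (simp add: insert_commute)
  then have "r = r'" by (rule idx_eq[OF a(1) a(2)])
  then have "fst (rxns!r) = snd (rxns!r)" using e1 by simp
  then show False using nonloop[OF a(1)] by simp
qed

lemma PH_ss_fwd: assumes "r < m" shows "PH (fwd rxns r) (ss_poly n y rxns k) = - A k r"
proof -
  have "PH (fwd rxns r) (ss_poly n y rxns k) = (\<Sum>r'<m. if r' = r then - A k r else 0)"
    unfolding fwd_def PH_ss unfolding fwd_def[symmetric]
  proof (rule sum.cong[OF refl])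
    fix r' assume "r' \<in> {..<m}"
    then have "r' < m" by simp
    then have "(fwd rxns r = fwd rxns r') = (r' = r)" "fwd rxns r \<noteq> rv rxns r'"
      using fwd_inj[OF assms \<open>r' < m\<close>] fwd_rv[OF assms \<open>r' < m\<close>] by auto
    then show "A k r' * (- (if fwd rxns r = fwd rxns r' then 1 else 0) + (if fwd rxns r = rv rxns r' then 1 else 0))
      = (if r' = r then - A k r else 0)" by simp
  qed
  then show ?thesis using assms by simp
qed

lemma PH_ss_rv: assumes "r < m" shows "PH (rv rxns r) (ss_poly n y rxns k) = A k r"
proof -
  have "PH (rv rxns r) (ss_poly n y rxns k) = (\<Sum>r'<m. if r' = r then A k r else 0)"
    unfolding rv_def PH_ss unfolding rv_def[symmetric]
  proof (rule sum.cong[OF refl])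
    fix r' assume "r' \<in> {..<m}"
    then have "r' < m" by simp
    then have "(rv rxns r = rv rxns r') = (r' = r)" "rv rxns r \<noteq> fwd rxns r'"
      using rv_inj[OF assms \<open>r' < m\<close>] fwd_rv[OF \<open>r' < m\<close> assms] by auto
    then show "A k r' * (- (if rv rxns r = fwd rxns r' then 1 else 0) + (if rv rxns r = rv rxns r' then 1 else 0))
      = (if r' = r then A k r else 0)" by simp
  qed
  then show ?thesis using assms by simp
qed

definition Pg :: "mpoly \<Rightarrow> bool" where
  "Pg g \<longleftrightarrow> ZZ g = 0 \<and> (\<forall>r<m. PH (fwd rxns r) g = - PH (rv rxns r) g)
      \<and> inrow n m A (\<lambda>r'. PH (rv rxns r') g)"

lemma K1: assumes "g \<in> steady_state_ideal n y rxns" shows "Pg g"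
proof -
  have "ideal_gen (ss_poly n y rxns ` {..<n}) \<subseteq> {g. Pg g}"
  proof (rule ideal_gen_min)
    show "0 \<in> {g. Pg g}" unfolding Pg_def by (simp add: FF_zero inrow_zero)
  next
    fix a b assume "a \<in> {g. Pg g}" "b \<in> {g. Pg g}"
    then show "a + b \<in> {g. Pg g}" unfolding Pg_def by (simp add: FF_add inrow_add)
  next
    fix q a assume "a \<in> {g. Pg g}"
    then have a: "Pg a" by simp
    have "inrow n m A (\<lambda>r'. PH (rv rxns r') (q * a))"
      by (rule inrow_scale[of _ _ _ "\<lambda>r'. PH (rv rxns r') a" _ "ZZ q"])
         (use a in \<open>auto simp: Pg_def rv_def PH_mult\<close>)
    then show "q * a \<in> {g. Pg g}" using a unfolding Pg_def
      by (simp add: ZZ_mult fwd_def rv_def PH_mult)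
  next
    show "ss_poly n y rxns ` {..<n} \<subseteq> {g. Pg g}"
    proof
      fix g assume "g \<in> ss_poly n y rxns ` {..<n}"
      then obtain k where k: "k < n" "g = ss_poly n y rxns k" by blast
      have "inrow n m A (\<lambda>r'. PH (rv rxns r') g)"
        by (rule inrow_scale[OF inrow_row[OF k(1)], where c=1]) (simp add: k PH_ss_rv)
      then show "g \<in> {g. Pg g}" unfolding Pg_def using k by (simp add: ZZ_ss PH_ss_fwd PH_ss_rv)
    qed
  qed
  then show ?thesis using assms unfolding steady_state_ideal_def by blast
qed

lemma PH_nz_key: assumes "PH v f \<noteq> 0" obtains \<alpha> where "\<alpha> \<in> Poly_Mapping.keys f" "phif v \<alpha> \<noteq> 0"
proof -
  from assms obtain \<alpha> where "\<alpha> \<in> Poly_Mapping.keys f" "Poly_Mapping.lookup f \<alpha> * phif v \<alpha> \<noteq> 0"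
    unfolding FF_def by (meson sum.not_neutral_contains_not_neutral)
  then show ?thesis using that by auto
qed

lemma phif_unique: assumes "phif v \<alpha> \<noteq> 0" "phif (K a b) \<alpha> \<noteq> 0" shows "v = K a b"
proof (rule ccontr)
  assume h: "v \<noteq> K a b"
  have "Poly_Mapping.lookup \<alpha> (K a b) = 0" using assms(1) h unfolding phif_def by (auto split: if_splits)
  moreover have "Poly_Mapping.lookup \<alpha> (K a b) = 1" using assms(2) unfolding phif_def by (auto split: if_splits)
  ultimately show False by simp
qed

lemma KB:
  assumes "is_binomial f" "v1 = K a1 b1" "v2 = K a2 b2" "v3 = K a3 b3"
    "v1 \<noteq> v2" "v1 \<noteq> v3" "v2 \<noteq> v3"
    "PH v1 f \<noteq> 0" "PH v2 f \<noteq> 0" "PH v3 f \<noteq> 0"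
  shows False
proof -
  obtain \<alpha>1 where a1: "\<alpha>1 \<in> Poly_Mapping.keys f" "phif v1 \<alpha>1 \<noteq> 0" using PH_nz_key assms(8) by blast
  obtain \<alpha>2 where a2: "\<alpha>2 \<in> Poly_Mapping.keys f" "phif v2 \<alpha>2 \<noteq> 0" using PH_nz_key assms(9) by blast
  obtain \<alpha>3 where a3: "\<alpha>3 \<in> Poly_Mapping.keys f" "phif v3 \<alpha>3 \<noteq> 0" using PH_nz_key assms(10) by blast
  have d: "\<alpha>1 \<noteq> \<alpha>2" "\<alpha>1 \<noteq> \<alpha>3" "\<alpha>2 \<noteq> \<alpha>3"
    using a1 a2 a3 phif_unique assms(2-7) by metis+
  have "card {\<alpha>1, \<alpha>2, \<alpha>3} \<le> card (Poly_Mapping.keys f)"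
    by (rule card_mono) (use a1 a2 a3 in auto)
  moreover have "card {\<alpha>1, \<alpha>2, \<alpha>3} = 3" using d by simp
  ultimately show False using assms(1) unfolding is_binomial_def by simp
qed


lemma PB2:
  assumes cd: "\<forall>i<c. \<forall>j<c. i \<noteq> j \<longrightarrow> (\<exists>k<n. y i k \<noteq> y j k)"
    and ub: "unconditionally_binomial n y rxns" and r: "r < m"
  shows "inrow n m A (ev r)"
proof -
  obtain B where B: "\<forall>b\<in>B. is_binomial b" "ideal_gen B = steady_state_ideal n y rxns"
    using ub unfolding unconditionally_binomial_def by blast
  have "\<exists>k<n. y (fst (rxns!r)) k \<noteq> y (snd (rxns!r)) k"
    using cd in_range[OF r] nonloop[OF r] by blast
  then obtain k where k0: "k < n" "y (fst (rxns!r)) k \<noteq> y (snd (rxns!r)) k" by blast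
  have k: "k < n" "A k r \<noteq> 0" using k0 unfolding init_graph_def coef_def by (simp_all add: case_prod_beta)
  have "ss_poly n y rxns k \<in> ideal_gen B"
    unfolding B(2) steady_state_ideal_def using k by (intro ideal_gen_gen) simp
  then obtain F cf where F: "finite F" "F \<subseteq> B" "ss_poly n y rxns k = (\<Sum>f\<in>F. cf f * f)"
    unfolding ideal_gen_def by blast
  have Pf: "Pg f" if "f \<in> B" for f
    using K1 ideal_gen_gen[OF that] B(2) by simp
  have "PH (fwd rxns r) (ss_poly n y rxns k) = (\<Sum>f\<in>F. ZZ (cf f) * PH (fwd rxns r) f)"
    unfolding F(3) FF_sum[OF F(1)]
  proof (rule sum.cong[OF refl])
    fix f assume "f \<in> F"
    then have "ZZ f = 0" using F(2) Pf unfolding Pg_def by blast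
    then show "PH (fwd rxns r) (cf f * f) = ZZ (cf f) * PH (fwd rxns r) f"
      unfolding fwd_def by (simp add: PH_mult)
  qed
  moreover have "PH (fwd rxns r) (ss_poly n y rxns k) \<noteq> 0" using PH_ss_fwd[OF r] k by simp
  ultimately have "(\<Sum>f\<in>F. ZZ (cf f) * PH (fwd rxns r) f) \<noteq> 0" by simp
  then obtain f where f0: "f \<in> F" "ZZ (cf f) * PH (fwd rxns r) f \<noteq> 0"
    by (meson sum.not_neutral_contains_not_neutral)
  then have f: "f \<in> F" "PH (fwd rxns r) f \<noteq> 0" by auto
  have fB: "f \<in> B" using f F by blast
  have P: "Pg f" using Pf fB .
  define x where "x = (\<lambda>r'. PH (rv rxns r') f)"
  have xin: "inrow n m A x" using P unfolding Pg_def x_def by simp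
  have xr: "x r \<noteq> 0" using P f r unfolding Pg_def x_def by auto
  have x0: "x r' = 0" if "r' < m" "r' \<noteq> r" for r'
  proof (rule ccontr)
    assume h: "x r' \<noteq> 0"
    have h': "PH (rv rxns r') f \<noteq> 0" using h unfolding x_def .
    have nz: "PH (fwd rxns r') f \<noteq> 0" using P h that unfolding Pg_def x_def by auto
    have d1: "fwd rxns r \<noteq> fwd rxns r'" using fwd_inj[OF r that(1)] that(2) by simp
    have d2: "fwd rxns r \<noteq> rv rxns r'" using fwd_rv[OF r that(1)] .
    have d3: "fwd rxns r' \<noteq> rv rxns r'" using fwd_rv[OF that(1) that(1)] .
    show False
      by (rule KB[OF B(1)[rule_format, OF fB] fwd_def fwd_def rv_def d1 d2 d3 f(2) nz h'])
  qed
  show ?thesis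
  proof (rule inrow_scale[OF xin, where c = "1 / x r"])
    fix r' assume "r' < m"
    then show "ev r r' = 1 / x r * x r'" using xr x0[of r'] unfolding ev_def by auto
  qed
qed

end

lemma run_exists: "\<exists>S'. run n m rs S S'"
proof (induction rs arbitrary: S)
  case Nil then show ?case by (blast intro: run_Nil)
next
  case (Cons r rs)
  obtain L M where S: "S = (L, M)" by (cases S)
  show ?case
  proof (cases "nbrs n L r \<subseteq> M")
    case True
    obtain S' where "run n m rs (L, M) S'" using Cons.IH by blast
    then show ?thesis using run_skip[OF True] S by blast
  next
    case False
    then obtain cs where cs: "cs \<in> nbrs n L r" "cs \<notin> M" by blast
    obtain S' where "run n m rs (pivot n m L r cs, insert cs M) S'" using Cons.IH by blast
    then show ?thesis using run_pivot[OF cs] S by blast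
  qed
qed

definition mu :: "nat \<Rightarrow> (nat \<Rightarrow> nat \<Rightarrow> rat) \<Rightarrow> nat \<Rightarrow> nat \<Rightarrow> nat \<Rightarrow> rat" where
  "mu n L r cs s = (if s \<in> nbrs n L r \<and> s \<noteq> cs then - L s r / L cs r else 0)"

lemma pivot_formula:
  assumes "L cs r \<noteq> 0" "r' < m"
  shows "pivot n m L r cs s r' = L s r' + mu n L r cs s * L cs r'"
  using assms unfolding pivot_def mu_def by (auto simp: field_simps)

lemma pivot_cs: "pivot n m L r cs cs r' = L cs r'"
  unfolding pivot_def by simp

lemma pivot_other: "s \<notin> nbrs n L r \<Longrightarrow> pivot n m L r cs s r' = L s r'"
  unfolding pivot_def by simp

lemma sum_delta_mult: "cs < (n::nat) \<Longrightarrow> (\<Sum>s<n. (if s = cs then a else 0) * (g s :: rat)) = a * g cs"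
proof -
  assume "cs < n"
  have "(\<Sum>s<n. (if s = cs then a else 0) * g s) = (\<Sum>s<n. if s = cs then a * g s else 0)"
    by (rule sum.cong) auto
  also have "\<dots> = a * g cs" using \<open>cs < n\<close> by (subst sum.delta) auto
  finally show ?thesis .
qed

lemma rowop_inrow:
  assumes cs: "cs < n" and h: "\<And>s r'. s < n \<Longrightarrow> r' < m \<Longrightarrow> L' s r' = L s r' + w s * L cs r'"
    and mcs: "w cs = 0"
  shows "inrow n m L' x \<longleftrightarrow> inrow n m L x"
proof
  assume "inrow n m L' x"
  then obtain v where v: "\<forall>r'<m. x r' = (\<Sum>s<n. v s * L' s r')" unfolding inrow_def by blast
  define a where "a = (\<Sum>t<n. v t * w t)"
  have "\<forall>r'<m. x r' = (\<Sum>s<n. (v s + (if s = cs then a else 0)) * L s r')"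
  proof (intro allI impI)
    fix r' assume r': "r' < m"
    have "x r' = (\<Sum>s<n. v s * L s r' + (v s * w s) * L cs r')"
      using v r' h by (simp add: algebra_simps)
    also have "\<dots> = (\<Sum>s<n. v s * L s r') + a * L cs r'"
      unfolding a_def by (simp add: sum.distrib sum_distrib_right)
    also have "\<dots> = (\<Sum>s<n. (v s + (if s = cs then a else 0)) * L s r')"
      by (simp add: distrib_right sum.distrib sum_delta_mult[OF cs])
    finally show "x r' = (\<Sum>s<n. (v s + (if s = cs then a else 0)) * L s r')" .
  qed
  then show "inrow n m L x" unfolding inrow_def by (intro exI[of _ "\<lambda>s. v s + (if s = cs then a else 0)"])
next
  assume "inrow n m L x"
  then obtain v where v: "\<forall>r'<m. x r' = (\<Sum>s<n. v s * L s r')" unfolding inrow_def by blast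
  define a where "a = (\<Sum>t<n. v t * w t)"
  have hcs: "L' cs r' = L cs r'" if "r' < m" for r' using h[OF cs that] mcs by simp
  have "\<forall>r'<m. x r' = (\<Sum>s<n. (v s - (if s = cs then a else 0)) * L' s r')"
  proof (intro allI impI)
    fix r' assume r': "r' < m"
    have "x r' = (\<Sum>s<n. v s * L' s r' - (v s * w s) * L' cs r')"
      using v r' h hcs by (simp add: algebra_simps)
    also have "\<dots> = (\<Sum>s<n. v s * L' s r') - a * L' cs r'"
      unfolding a_def by (simp add: sum_subtractf sum_distrib_right)
    also have "\<dots> = (\<Sum>s<n. (v s - (if s = cs then a else 0)) * L' s r')"
      by (simp add: left_diff_distrib sum_subtractf sum_delta_mult[OF cs])
    finally show "x r' = (\<Sum>s<n. (v s - (if s = cs then a else 0)) * L' s r')" .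
  qed
  then show "inrow n m L' x" unfolding inrow_def by (intro exI[of _ "\<lambda>s. v s - (if s = cs then a else 0)"])
qed

lemma pivot_inrow:
  assumes "cs \<in> nbrs n L r"
  shows "inrow n m (pivot n m L r cs) x \<longleftrightarrow> inrow n m L x"
proof -
  have cs: "cs < n" "L cs r \<noteq> 0" using assms unfolding nbrs_def by auto
  show ?thesis
    by (rule rowop_inrow[OF cs(1), where w = "mu n L r cs"])
       (simp_all add: pivot_formula[where L=L and cs=cs and r=r, OF cs(2)] mu_def)
qed

lemma run_inrow: "run n m rs S S' \<Longrightarrow> inrow n m (fst S') x \<longleftrightarrow> inrow n m (fst S) x"
proof (induction rule: run.induct)
  case (run_Nil S) then show ?case by simp
next
  case (run_skip L r M rs S') then show ?case by simp
next
  case (run_pivot cs L r M rs S') then show ?case using pivot_inrow[OF run_pivot.hyps(1)] by simp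
qed

definition Inv :: "nat \<Rightarrow> nat \<Rightarrow> nat list \<Rightarrow> (nat \<Rightarrow> nat \<Rightarrow> rat) \<Rightarrow> nat set \<Rightarrow> bool" where
  "Inv n m rs L M \<longleftrightarrow> M \<subseteq> {..<n}
    \<and> (\<forall>r'<m. r' \<notin> set rs \<longrightarrow> (\<exists>s\<in>M. L s r' \<noteq> 0 \<and> (\<forall>s''<n. s'' \<noteq> s \<longrightarrow> L s'' r' = 0)))
    \<and> (\<forall>s\<in>M. \<exists>r'<m. r' \<notin> set rs \<and> L s r' \<noteq> 0)
    \<and> (\<forall>s<n. \<forall>r1<m. \<forall>r2<m. r1 \<notin> set rs \<longrightarrow> r2 \<notin> set rs \<longrightarrow> L s r1 \<noteq> 0 \<longrightarrow> L s r2 \<noteq> 0 \<longrightarrow> r1 = r2)"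

lemma no_skip:
  assumes inv: "Inv n m (r # rs) L M" and E: "inrow n m L (ev r)" and r: "r < m"
    and sub: "nbrs n L r \<subseteq> M" and dist: "distinct (r # rs)"
  shows False
proof -
  obtain v where v: "\<forall>r'<m. ev r r' = (\<Sum>s<n. v s * L s r')" using E unfolding inrow_def by blast
  have vz: "v s = 0" if s: "s \<in> M" for s
  proof -
    obtain r' where r': "r' < m" "r' \<notin> set (r # rs)" "L s r' \<noteq> 0" using inv s unfolding Inv_def by blast
    obtain s0 where s0: "s0 \<in> M" "L s0 r' \<noteq> 0" "\<forall>s''<n. s'' \<noteq> s0 \<longrightarrow> L s'' r' = 0"
      using inv r' unfolding Inv_def by blast
    have sn: "s < n" using inv s unfolding Inv_def by blast
    have "s0 = s" using s0(3) sn r'(3) by blast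
    have "(\<Sum>t<n. v t * L t r') = (\<Sum>t<n. if t = s then v s * L s r' else 0)"
      by (rule sum.cong) (use s0(3) \<open>s0 = s\<close> in auto)
    also have "\<dots> = v s * L s r'" using sn by simp
    finally have "ev r r' = v s * L s r'" using v r' by simp
    moreover have "ev r r' = 0" using r' unfolding ev_def by auto
    ultimately show "v s = 0" using r'(3) by simp
  qed
  have "(\<Sum>t<n. v t * L t r) = 0"
  proof (rule sum.neutral, intro ballI)
    fix t assume "t \<in> {..<n}"
    show "v t * L t r = 0"
    proof (cases "L t r = 0")
      case False
      then have "t \<in> M" using sub \<open>t \<in> {..<n}\<close> unfolding nbrs_def by auto
      then show ?thesis using vz by simp
    qed simp
  qed
  moreover have "ev r r = 1" unfolding ev_def by simp
  ultimately show False using v r by simp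
qed

lemma pivot_step_inv:
  assumes inv: "Inv n m (r # rs) L M" and cs: "cs \<in> nbrs n L r" "cs \<notin> M"
    and dist: "distinct (r # rs)" and r: "r < m"
  shows "Inv n m rs (pivot n m L r cs) (insert cs M)"
proof -
  let ?L' = "pivot n m L r cs"
  have csn: "cs < n" "L cs r \<noteq> 0" using cs unfolding nbrs_def by auto
  have Msub: "M \<subseteq> {..<n}" using inv unfolding Inv_def by blast
  have inv2: "\<forall>r'<m. r' \<notin> set (r # rs) \<longrightarrow> (\<exists>s\<in>M. L s r' \<noteq> 0 \<and> (\<forall>s''<n. s'' \<noteq> s \<longrightarrow> L s'' r' = 0))"
    using inv unfolding Inv_def by simp
  have colz: "L cs r' = 0" if r': "r' < m" "r' \<notin> set (r # rs)" for r'
  proof -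
    obtain s0 where s0: "s0 \<in> M" "L s0 r' \<noteq> 0" "\<forall>s''<n. s'' \<noteq> s0 \<longrightarrow> L s'' r' = 0"
      using inv2 r' by blast
    have "cs \<noteq> s0" using s0(1) cs(2) by auto
    then show "L cs r' = 0" using s0(3) csn(1) by simp
  qed
  have old: "?L' s r' = L s r'" if r': "r' < m" "r' \<notin> set (r # rs)" for s r'
  proof -
    have "L cs r' = 0" using colz[OF r'] .
    moreover have "r' \<noteq> r" using r' by auto
    ultimately show ?thesis unfolding pivot_def by auto
  qed
  have newc: "?L' s r = 0" if "s < n" "s \<noteq> cs" for s
  proof (cases "s \<in> nbrs n L r")
    case True then show ?thesis using that unfolding pivot_def by simp
  next
    case False then show ?thesis using that pivot_other[OF False] unfolding nbrs_def by simp
  qed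
  have newcs: "?L' cs r \<noteq> 0" using pivot_cs csn by simp
  have set_eq: "(r' \<notin> set rs) \<longleftrightarrow> (r' = r \<or> r' \<notin> set (r # rs))" for r' using dist by auto
  have I1: "insert cs M \<subseteq> {..<n}" using Msub csn by auto
  have I2: "\<forall>r'<m. r' \<notin> set rs \<longrightarrow> (\<exists>s\<in>insert cs M. ?L' s r' \<noteq> 0 \<and> (\<forall>s''<n. s'' \<noteq> s \<longrightarrow> ?L' s'' r' = 0))"
  proof (intro allI impI)
    fix r' assume r': "r' < m" "r' \<notin> set rs"
    show "\<exists>s\<in>insert cs M. ?L' s r' \<noteq> 0 \<and> (\<forall>s''<n. s'' \<noteq> s \<longrightarrow> ?L' s'' r' = 0)"
    proof (cases "r' = r")
      case True
      have "?L' cs r' \<noteq> 0 \<and> (\<forall>s''<n. s'' \<noteq> cs \<longrightarrow> ?L' s'' r' = 0)"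
        using newc newcs True by simp
      then show ?thesis by blast
    next
      case False
      then have r'': "r' \<notin> set (r # rs)" using r' by simp
      obtain s0 where s0: "s0 \<in> M" "L s0 r' \<noteq> 0" "\<forall>s''<n. s'' \<noteq> s0 \<longrightarrow> L s'' r' = 0"
        using inv r'(1) r'' unfolding Inv_def by blast
      then show ?thesis using old[OF r'(1) r''] by auto
    qed
  qed
  have I3: "\<forall>s\<in>insert cs M. \<exists>r'<m. r' \<notin> set rs \<and> ?L' s r' \<noteq> 0"
  proof
    fix s assume "s \<in> insert cs M"
    then show "\<exists>r'<m. r' \<notin> set rs \<and> ?L' s r' \<noteq> 0"
    proof
      assume "s = cs" then show ?thesis using newcs r dist by auto
    next
      assume "s \<in> M"
      then obtain r' where r': "r' < m" "r' \<notin> set (r # rs)" "L s r' \<noteq> 0" using inv unfolding Inv_def by blast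
      then show ?thesis using old[OF r'(1) r'(2)] by auto
    qed
  qed
  have I4: "\<forall>s<n. \<forall>r1<m. \<forall>r2<m. r1 \<notin> set rs \<longrightarrow> r2 \<notin> set rs \<longrightarrow> ?L' s r1 \<noteq> 0 \<longrightarrow> ?L' s r2 \<noteq> 0 \<longrightarrow> r1 = r2"
  proof (intro allI impI)
    fix s r1 r2 assume h: "s < n" "r1 < m" "r2 < m" "r1 \<notin> set rs" "r2 \<notin> set rs" "?L' s r1 \<noteq> 0" "?L' s r2 \<noteq> 0"
    have col_r: "s = cs" if "r0 = r" "?L' s r0 \<noteq> 0" for r0
    proof (rule ccontr)
      assume "s \<noteq> cs" then have "?L' s r = 0" using newc h(1) by simp
      then show False using that by simp
    qed
    have oldcs: "?L' cs r' = 0" if "r' < m" "r' \<notin> set (r # rs)" for r'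
      using old[OF that] colz[OF that] by simp
    show "r1 = r2"
    proof (cases "r1 = r")
      case True
      then have "s = cs" using col_r[OF True h(6)] by simp
      show ?thesis
      proof (rule ccontr)
        assume "r1 \<noteq> r2"
        then have "r2 \<notin> set (r # rs)" using True h(5) by simp
        then show False using oldcs[OF h(3)] h(7) \<open>s = cs\<close> by simp
      qed
    next
      case False
      then have r1o: "r1 \<notin> set (r # rs)" using h(4) by simp
      show ?thesis
      proof (cases "r2 = r")
        case True
        then have "s = cs" using col_r[OF True h(7)] by simp
        then show ?thesis using oldcs[OF h(2) r1o] h(6) by simp
      next
        case False
        then have r2o: "r2 \<notin> set (r # rs)" using h(5) by simp
        have I4o: "\<forall>s<n. \<forall>r1<m. \<forall>r2<m. r1 \<notin> set (r # rs) \<longrightarrow> r2 \<notin> set (r # rs) \<longrightarrow> L s r1 \<noteq> 0 \<longrightarrow> L s r2 \<noteq> 0 \<longrightarrow> r1 = r2"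
          using inv unfolding Inv_def by blast
        have "L s r1 \<noteq> 0" "L s r2 \<noteq> 0" using old[OF h(2) r1o] old[OF h(3) r2o] h(6,7) by simp_all
        then show ?thesis using I4o h(1-3) r1o r2o by blast
      qed
    qed
  qed
  show ?thesis unfolding Inv_def using I1 I2 I3 I4 by blast
qed

lemma run_inv:
  "run n m rs S S' \<Longrightarrow> distinct rs \<Longrightarrow> set rs \<subseteq> {..<m} \<Longrightarrow> (\<forall>r<m. inrow n m (fst S) (ev r))
    \<Longrightarrow> Inv n m rs (fst S) (snd S) \<Longrightarrow> Inv n m [] (fst S') (snd S')"
proof (induction rule: run.induct)
  case (run_Nil S) then show ?case by simp
next
  case (run_skip L r M rs S')
  have "r < m" using run_skip.prems(2) by simp
  then have False using no_skip[of n m r rs L M] run_skip by simp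
  then show ?case ..
next
  case (run_pivot cs L r M rs S')
  have r: "r < m" using run_pivot.prems(2) by simp
  have inv': "Inv n m rs (pivot n m L r cs) (insert cs M)"
    using pivot_step_inv[OF _ run_pivot.hyps(1,2) _ r] run_pivot.prems by simp
  have E': "\<forall>r'<m. inrow n m (pivot n m L r cs) (ev r')" using pivot_inrow[OF run_pivot.hyps(1)] run_pivot.prems(3) by simp
  show ?case using run_pivot.IH run_pivot.prems inv' E' by simp
qed

lemma edges_iff: "(a, b) \<in> edges n m L \<longleftrightarrow>
   (\<exists>s r. s < n \<and> r < m \<and> L s r \<noteq> 0 \<and> ((a = Inl s \<and> b = Inr r) \<or> (a = Inr r \<and> b = Inl s)))"
  unfolding edges_def by blast

lemma comp_refl: "v \<in> component n m L v"
  unfolding component_def by simp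

lemma comp_step: "w \<in> component n m L v \<Longrightarrow> (w, u) \<in> edges n m L \<Longrightarrow> u \<in> component n m L v"
  unfolding component_def by (simp add: rtrancl_into_rtrancl)

lemma comp_sub:
  assumes "v \<in> C" "\<And>a b. a \<in> C \<Longrightarrow> (a, b) \<in> edges n m L \<Longrightarrow> b \<in> C"
  shows "component n m L v \<subseteq> C"
proof
  fix w assume "w \<in> component n m L v"
  then have "(v, w) \<in> (edges n m L)\<^sup>*" unfolding component_def by simp
  then show "w \<in> C"
    by (induction rule: rtrancl_induct) (use assms in blast)+
qed

lemma comp_pair:
  assumes s: "s < n" and r: "r < m" and nz: "L s r \<noteq> 0"
    and col: "\<And>s''. s'' < n \<Longrightarrow> L s'' r \<noteq> 0 \<Longrightarrow> s'' = s"
    and row: "\<And>r''. r'' < m \<Longrightarrow> L s r'' \<noteq> 0 \<Longrightarrow> r'' = r"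
  shows "component n m L (Inl s) = {Inl s, Inr r}" "component n m L (Inr r) = {Inl s, Inr r}"
proof -
  have e1: "(Inl s, Inr r) \<in> edges n m L" "(Inr r, Inl s) \<in> edges n m L"
    using s r nz unfolding edges_iff by blast+
  have cl: "b \<in> {Inl s, Inr r}" if ab: "a \<in> {Inl s, Inr r}" "(a, b) \<in> edges n m L" for a b
  proof -
    obtain s' r' where h: "s' < n" "r' < m" "L s' r' \<noteq> 0"
      "(a = Inl s' \<and> b = Inr r') \<or> (a = Inr r' \<and> b = Inl s')"
      using ab(2) unfolding edges_iff by blast
    show ?thesis
    proof (cases "a = Inl s")
      case True
      then have "s' = s" "b = Inr r'" using h(4) by auto
      then show ?thesis using row[OF h(2)] h(3) by simp
    next
      case False
      then have "a = Inr r" using ab(1) by simp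
      then have "r' = r" "b = Inl s'" using h(4) by auto
      then show ?thesis using col[OF h(1)] h(3) by simp
    qed
  qed
  show "component n m L (Inl s) = {Inl s, Inr r}"
  proof
    show "component n m L (Inl s) \<subseteq> {Inl s, Inr r}" by (rule comp_sub) (use cl in auto)
    show "{Inl s, Inr r} \<subseteq> component n m L (Inl s)"
      using comp_refl comp_step[OF comp_refl e1(1)] by auto
  qed
  show "component n m L (Inr r) = {Inl s, Inr r}"
  proof
    show "component n m L (Inr r) \<subseteq> {Inl s, Inr r}" by (rule comp_sub) (use cl in auto)
    show "{Inl s, Inr r} \<subseteq> component n m L (Inr r)"
      using comp_refl comp_step[OF comp_refl e1(2)] by auto
  qed
qed

lemma comp_single:
  assumes "\<And>r. r < m \<Longrightarrow> L s r = 0"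
  shows "component n m L (Inl s) = {Inl s}"
proof
  show "component n m L (Inl s) \<subseteq> {Inl s}"
  proof (rule comp_sub)
    fix a b assume "a \<in> {Inl s}" "(a, b) \<in> edges n m L"
    then show "b \<in> {Inl s}" using assms unfolding edges_iff by auto
  qed simp
  show "{Inl s} \<subseteq> component n m L (Inl s)" using comp_refl by auto
qed

lemma final_UB:
  assumes inv: "Inv n m [] L M"
  shows "returns_UB n m L"
proof -
  have Msub: "M \<subseteq> {..<n}"
    and I2: "\<forall>r'<m. \<exists>s\<in>M. L s r' \<noteq> 0 \<and> (\<forall>s''<n. s'' \<noteq> s \<longrightarrow> L s'' r' = 0)"
    and I4: "\<forall>s<n. \<forall>r1<m. \<forall>r2<m. L s r1 \<noteq> 0 \<longrightarrow> L s r2 \<noteq> 0 \<longrightarrow> r1 = r2"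
    using inv unfolding Inv_def by auto
  have pair: "component n m L (Inl s) = {Inl s, Inr r} \<and> component n m L (Inr r) = {Inl s, Inr r}"
    if h: "s < n" "r < m" "L s r \<noteq> 0" for s r
  proof -
    obtain s0 where s0: "s0 \<in> M" "L s0 r \<noteq> 0" "\<forall>s''<n. s'' \<noteq> s0 \<longrightarrow> L s'' r = 0"
      using I2 h(2) by blast
    have "s0 = s" using s0(3) h(1,3) by blast
    have col: "s'' = s" if "s'' < n" "L s'' r \<noteq> 0" for s''
      using s0(3) that \<open>s0 = s\<close> by blast
    have row: "r'' = r" if "r'' < m" "L s r'' \<noteq> 0" for r''
      using I4 \<open>s < n\<close> \<open>r < m\<close> \<open>L s r \<noteq> 0\<close> that by blast
    show ?thesis using comp_pair[where L=L, OF h col row] by blast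
  qed
  show ?thesis unfolding returns_UB_def
  proof
    fix v assume "v \<in> vertices n m"
    then consider (L) s where "s < n" "v = Inl s" | (R) r where "r < m" "v = Inr r"
      unfolding vertices_def by blast
    then show "(\<exists>s<n. component n m L v = {Inl s}) \<or>
        (\<exists>s<n. \<exists>r<m. L s r \<noteq> 0 \<and> component n m L v = {Inl s, Inr r})"
    proof cases
      case (L s)
      show ?thesis
      proof (cases "\<exists>r<m. L s r \<noteq> 0")
        case True
        then obtain r where r: "r < m" "L s r \<noteq> 0" by blast
        then show ?thesis using pair[OF L(1) r] L by blast
      next
        case False
        then have "component n m L (Inl s) = {Inl s}" by (intro comp_single) auto
        then show ?thesis using L by blast
      qed
    next
      case (R r)
      obtain s0 where s0: "s0 \<in> M" "L s0 r \<noteq> 0" using I2 R(1) by blast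
      have "s0 < n" using s0(1) Msub by blast
      have c: "component n m L v = {Inl s0, Inr r}" using pair[OF \<open>s0 < n\<close> R(1) s0(2)] R(2) by simp
      show ?thesis using c \<open>s0 < n\<close> R(1) s0(2) by auto
    qed
  qed
qed

lemma UB_rows:
  assumes ub: "returns_UB n m L" and r: "r < m"
  shows "inrow n m L (ev r)"
proof -
  have "Inr r \<in> vertices n m" using r unfolding vertices_def by blast
  then have disj: "(\<exists>s<n. component n m L (Inr r) = {Inl s}) \<or>
        (\<exists>s<n. \<exists>r'<m. L s r' \<noteq> 0 \<and> component n m L (Inr r) = {Inl s, Inr r'})"
    using ub unfolding returns_UB_def by blast
  have rin: "Inr r \<in> component n m L (Inr r)" by (rule comp_refl)
  obtain s r0 where s: "s < n" "r0 < m" "L s r0 \<noteq> 0" and C: "component n m L (Inr r) = {Inl s, Inr r0}"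
    using disj rin by auto
  have "r0 = r" using rin C by auto
  have sin: "Inl s \<in> component n m L (Inr r)" using C by simp
  have col: "s'' = s" if "s'' < n" "L s'' r \<noteq> 0" for s''
  proof -
    have "(Inr r, Inl s'') \<in> edges n m L" using that r unfolding edges_iff by blast
    then have "Inl s'' \<in> component n m L (Inr r)" by (rule comp_step[OF rin])
    then show ?thesis using C by auto
  qed
  have row: "r'' = r" if "r'' < m" "L s r'' \<noteq> 0" for r''
  proof -
    have "(Inl s, Inr r'') \<in> edges n m L" using that s(1) unfolding edges_iff by blast
    then have "Inr r'' \<in> component n m L (Inr r)" by (rule comp_step[OF sin])
    then show ?thesis using C \<open>r0 = r\<close> by auto
  qed
  have Lsr: "L s r \<noteq> 0" using s(3) \<open>r0 = r\<close> by simp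
  have "\<forall>r'<m. ev r r' = (\<Sum>t<n. (if t = s then 1 / L s r else 0) * L t r')"
  proof (intro allI impI)
    fix r' assume "r' < m"
    have "(\<Sum>t<n. (if t = s then 1 / L s r else 0) * L t r') = 1 / L s r * L s r'"
      by (rule sum_delta_mult[OF s(1)])
    also have "\<dots> = ev r r'"
    proof (cases "r' = r")
      case True then show ?thesis using Lsr unfolding ev_def by simp
    next
      case False
      then have "L s r' = 0" using row \<open>r' < m\<close> by blast
      then show ?thesis using False unfolding ev_def by simp
    qed
    finally show "ev r r' = (\<Sum>t<n. (if t = s then 1 / L s r else 0) * L t r')" by simp
  qed
  then show ?thesis unfolding inrow_def by (intro exI[of _ "\<lambda>t. if t = s then 1 / L s r else 0"])
qed

context net
begin

definition bb :: "nat \<Rightarrow> mpoly" where "bb r = binom n y (fst (rxns!r)) (snd (rxns!r))"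

lemma ss_bb: "ss_poly n y rxns k = (\<Sum>r<m. Const (A k r) * bb r)"
  unfolding ss_poly_expand bb_def ..

lemma PB1:
  assumes E: "\<forall>r<m. inrow n m A (ev r)"
  shows "unconditionally_binomial n y rxns"
proof -
  let ?S = "ss_poly n y rxns ` {..<n}"
  let ?B = "bb ` {..<m}"
  have bbin: "bb r \<in> ideal_gen ?S" if r: "r < m" for r
  proof -
    obtain v where v: "\<forall>r'<m. ev r r' = (\<Sum>s<n. v s * A s r')" using E r unfolding inrow_def by blast
    have "(\<Sum>s<n. Const (v s) * ss_poly n y rxns s) = (\<Sum>s<n. \<Sum>r'<m. Const (v s * A s r') * bb r')"
      unfolding ss_bb by (simp add: sum_distrib_left mult.assoc[symmetric] Const_mult)
    also have "\<dots> = (\<Sum>r'<m. \<Sum>s<n. Const (v s * A s r') * bb r')"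
      by (rule sum.swap)
    also have "\<dots> = (\<Sum>r'<m. Const (\<Sum>s<n. v s * A s r') * bb r')"
      by (simp add: sum_distrib_right[symmetric] Const_sum)
    also have "\<dots> = (\<Sum>r'<m. Const (ev r r') * bb r')"
      by (rule sum.cong) (use v in auto)
    also have "\<dots> = (\<Sum>r'<m. if r' = r then bb r' else 0)"
      by (rule sum.cong) (auto simp: ev_def Const_1 Const_0)
    also have "\<dots> = bb r" using r by simp
    finally have eq: "bb r = (\<Sum>s<n. Const (v s) * ss_poly n y rxns s)" by simp
    show ?thesis unfolding eq
      by (rule ideal_gen_sum_mult) (auto intro: ideal_gen_gen)
  qed
  have "ideal_gen ?B \<subseteq> ideal_gen ?S"
    by (rule ideal_gen_min) (use bbin in \<open>auto intro: ideal_gen_zero ideal_gen_add ideal_gen_mult\<close>)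
  moreover have "ideal_gen ?S \<subseteq> ideal_gen ?B"
  proof (rule ideal_gen_min)
    show "?S \<subseteq> ideal_gen ?B"
    proof
      fix g assume "g \<in> ?S"
      then obtain k where gk: "g = ss_poly n y rxns k" by blast
      have "ss_poly n y rxns k \<in> ideal_gen ?B" unfolding ss_bb
        by (rule ideal_gen_sum_mult) (auto intro: ideal_gen_gen)
      then show "g \<in> ideal_gen ?B" using gk by simp
    qed
  qed (auto intro: ideal_gen_zero ideal_gen_add ideal_gen_mult)
  ultimately have "ideal_gen ?B = steady_state_ideal n y rxns"
    unfolding steady_state_ideal_def by blast
  moreover have "\<forall>b\<in>?B. is_binomial b" unfolding bb_def using binom_binomial by blast
  ultimately show ?thesis unfolding unconditionally_binomial_def by blast
qed

end

theorem mainTheorem1: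
  fixes n c :: nat and y :: "nat \<Rightarrow> nat \<Rightarrow> nat" and rxns :: "(nat \<times> nat) list"
    and order :: "nat list"
  assumes complexes_distinct: "\<forall>i<c. \<forall>j<c. i \<noteq> j \<longrightarrow> (\<exists>k<n. y i k \<noteq> y j k)"
    and rxns_wf: "\<forall>(i, j)\<in>set rxns. i < c \<and> j < c \<and> i \<noteq> j"
    and rxns_once: "distinct (map (\<lambda>(i, j). {i, j}) rxns)"
    and order_perm: "distinct order" "set order = {..<length rxns}"
  shows "(\<exists>S. run n (length rxns) order (init_graph y rxns, {}) S) \<and>
         (\<forall>L M. run n (length rxns) order (init_graph y rxns, {}) (L, M) \<longrightarrow>
            (returns_UB n (length rxns) L \<longleftrightarrow> unconditionally_binomial n y rxns))"
proof -
  interpret net n c y rxns using rxns_wf rxns_once by unfold_locales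
  have part2: "returns_UB n m L \<longleftrightarrow> unconditionally_binomial n y rxns"
    if R: "run n m order (A, {}) (L, M)" for L M
  proof
    assume ub: "returns_UB n m L"
    have "\<forall>r<m. inrow n m A (ev r)"
      using UB_rows[OF ub] run_inrow[OF R] by simp
    then show "unconditionally_binomial n y rxns" by (rule PB1)
  next
    assume ub: "unconditionally_binomial n y rxns"
    have E: "\<forall>r<m. inrow n m A (ev r)" using PB2[OF complexes_distinct ub] by blast
    have I0: "Inv n m order A {}" unfolding Inv_def using order_perm(2) by auto
    have "Inv n m [] L M"
      using run_inv[OF R order_perm(1)] order_perm(2) E I0 by simp
    then show "returns_UB n m L" by (rule final_UB)
  qed
  show ?thesis using run_exists part2 by blast
qed

end
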